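(* Let $(G,M,I)$ be a finite formal context and let $(H_0(\mathcal F_k))_{k\ge 0}$ be the chain complex obtained by taking zeroth cellular cosheaf homology of each cosheaf $\mathcal F_k:\sigma\mapsto C_k(\Delta[\sigma'])$ on $D(G,M,I)$, with differentials induced by the simplicial boundary maps. Then the homology of this chain complex in degree $k$ is isomorphic to the real simplicial homology $H_k(D(M,G,I^T);\mathbb R)$ of the dual Dowker complex, for every $k\ge 0$.
   Context: A formal context is a triple $(G,M,I)$ with $I\subseteq G\times M$; for $A\subseteq G$, $A'=\{m: gIm\ \forall g\in A\}$, for $B\subseteq M$, $B'=\{g: gIm\ \forall m\in B\}$. The Dowker complex $D(G,M,I)$ is the abstract simplicial complex on $G$ whose simplices are the nonempty $\sigma\subseteq G$ with $\sigma'\ne\emptyset$; $D(M,G,I^T)$ is the abstract simplicial complex on $M$ whose simplices are the nonempty $S\subseteq M$ with $S'\neq\emptyset$. $C_k(\Delta[S])$ is the space of real oriented simplicial $k$-chains of the full simplex on $S$; for $\sigma\subseteq\tau$ the extension $\mathcal F_k(\tau)\to\mathcal F_k(\sigma)$ is induced by $\tau'\subseteq\sigma'$. Cellular cosheaf homology of a cosheaf $\mathcal F$ on $D(G,M,I)$ is the homology of $C_j=\bigoplus_{\dim\tau=j}\mathcal F(\tau)$ with $\partial_j x=\sum_{i}(-1)^i\mathcal F(\tau_i\subseteq\tau)(x)$ ($\tau_i$ the face omitting the $i$-th vertex in a fixed order), and $H_0=C_0/\partial_1C_1$. *)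

theory Defs
  imports "HOL-Analysis.Analysis"
begin

definition deriv :: "'x set \<Rightarrow> 'y set \<Rightarrow> ('x \<times> 'y) set \<Rightarrow> 'x set \<Rightarrow> 'y set" where
  "deriv X Y R A = {y \<in> Y. \<forall>x\<in>A. (x, y) \<in> R}"

definition dowker :: "'x set \<Rightarrow> 'y set \<Rightarrow> ('x \<times> 'y) set \<Rightarrow> 'x set set" where
  "dowker X Y R = {\<sigma>. \<sigma> \<noteq> {} \<and> \<sigma> \<subseteq> X \<and> deriv X Y R \<sigma> \<noteq> {}}"

(* Real oriented k-chains of a simplicial complex K (a set of simplices), in the
   basis of simplices oriented by the increasing order of their vertices:
   a chain is a real coefficient for each k-simplex (card = k+1). *)
definition chains :: "'a set set \<Rightarrow> nat \<Rightarrow> ('a set \<Rightarrow> real) set" where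
  "chains K k = {c. \<forall>\<sigma>. c \<sigma> \<noteq> 0 \<longrightarrow> \<sigma> \<in> K \<and> card \<sigma> = k + 1}"

definition full_simplex :: "'a set \<Rightarrow> 'a set set" where
  "full_simplex S = {\<sigma>. \<sigma> \<noteq> {} \<and> \<sigma> \<subseteq> S}"

(* Simplicial boundary on chains over the finite vertex set V:
   (\<partial>c)(\<tau>) = \<Sum> over simplices \<tau> \<union> {v}, with sign (-1)^i where i is the
   position of v in the increasing ordering of \<tau> \<union> {v}.
   (Only meaningful in degrees k \<ge> 1; \<partial>_0 is taken to be 0 separately.) *)
definition bd :: "'a::linorder set \<Rightarrow> ('a set \<Rightarrow> real) \<Rightarrow> ('a set \<Rightarrow> real)" where
  "bd V c = (\<lambda>\<tau>. \<Sum>v\<in>V - \<tau>. (-1) ^ card {w\<in>\<tau>. w < v} * c (insert v \<tau>))"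

(* Simplicial homology H_k(K;R) presented as a subquotient Z/B of the chain space *)
definition cycles :: "'a::linorder set \<Rightarrow> 'a set set \<Rightarrow> nat \<Rightarrow> ('a set \<Rightarrow> real) set" where
  "cycles V K k = {c \<in> chains K k. k = 0 \<or> bd V c = (\<lambda>_. 0)}"

definition boundaries :: "'a::linorder set \<Rightarrow> 'a set set \<Rightarrow> nat \<Rightarrow> ('a set \<Rightarrow> real) set" where
  "boundaries V K k = bd V ` chains K (k + 1)"

(* Cosheaf F_k : \<sigma> \<mapsto> C_k(\<Delta>[\<sigma>']) on D(G,M,I).  The j-th cellular chain group
   \<Oplus>_{dim \<sigma> = j} F_k(\<sigma>) is represented by functions x with x \<sigma> \<in> C_k(\<Delta>[\<sigma>']). *)
definition cosheaf_chains ::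
  "'g set \<Rightarrow> 'm set \<Rightarrow> ('g \<times> 'm) set \<Rightarrow> nat \<Rightarrow> nat \<Rightarrow> ('g set \<Rightarrow> 'm set \<Rightarrow> real) set" where
  "cosheaf_chains G M I k j =
     {x. \<forall>\<sigma>. (x \<sigma> \<noteq> (\<lambda>_. 0) \<longrightarrow> \<sigma> \<in> dowker G M I \<and> card \<sigma> = j + 1)
            \<and> x \<sigma> \<in> chains (full_simplex (deriv G M I \<sigma>)) k}"

(* Cellular cosheaf boundary: the extension maps F_k(\<tau>) \<rightarrow> F_k(\<sigma>) for \<sigma> \<subseteq> \<tau>
   are the inclusions C_k(\<Delta>[\<tau>']) \<subseteq> C_k(\<Delta>[\<sigma>']); the face \<sigma> = \<tau> - {g} of
   \<tau> omits the i-th vertex, i = position of g in \<tau> (increasing order). *)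
definition cosheaf_bd ::
  "'g::linorder set \<Rightarrow> ('g set \<Rightarrow> 'm set \<Rightarrow> real) \<Rightarrow> ('g set \<Rightarrow> 'm set \<Rightarrow> real)" where
  "cosheaf_bd G x = (\<lambda>\<sigma> \<rho>. \<Sum>g\<in>G - \<sigma>. (-1) ^ card {w\<in>\<sigma>. w < g} * x (insert g \<sigma>) \<rho>)"

(* Map H_0(F_k) \<rightarrow> H_0(F_{k-1}) induced by the simplicial boundary, on representatives *)
definition cosheaf_d ::
  "'m::linorder set \<Rightarrow> ('g set \<Rightarrow> 'm set \<Rightarrow> real) \<Rightarrow> ('g set \<Rightarrow> 'm set \<Rightarrow> real)" where
  "cosheaf_d M x = (\<lambda>\<sigma>. bd M (x \<sigma>))"

(* The degree-k homology of the complex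
   (H_0(F_k), d_k) is ker d_k / im d_{k+1}; in terms of representatives in
   C_0(F_k) this is the subquotient Z/B below (third isomorphism theorem
   applied to the quotient by \<partial>_1 C_1(F_k)). *)
definition H0_cycles ::
  "'g::linorder set \<Rightarrow> 'm::linorder set \<Rightarrow> ('g \<times> 'm) set \<Rightarrow> nat \<Rightarrow> ('g set \<Rightarrow> 'm set \<Rightarrow> real) set" where
  "H0_cycles G M I k =
     {x \<in> cosheaf_chains G M I k 0.
        k = 0 \<or> cosheaf_d M x \<in> cosheaf_bd G ` cosheaf_chains G M I (k - 1) 1}"

definition H0_boundaries ::
  "'g::linorder set \<Rightarrow> 'm::linorder set \<Rightarrow> ('g \<times> 'm) set \<Rightarrow> nat \<Rightarrow> ('g set \<Rightarrow> 'm set \<Rightarrow> real) set" where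
  "H0_boundaries G M I k =
     {(\<lambda>\<sigma> \<rho>. a \<sigma> \<rho> + b \<sigma> \<rho>) | a b.
        a \<in> cosheaf_bd G ` cosheaf_chains G M I k 1 \<and>
        b \<in> cosheaf_d M ` cosheaf_chains G M I (k + 1) 0}"

(* Isomorphism of real vector spaces Z/B \<cong> Z'/B' (B \<subseteq> Z subspaces of the pointwise
   real vector space 'g set \<Rightarrow> 'm set \<Rightarrow> real, B' \<subseteq> Z' subspaces of 'a set \<Rightarrow> real):
   a real-linear map f with f(Z) \<subseteq> Z' inducing a bijection Z/B \<rightarrow> Z'/B'. *)
definition subquot_iso ::
  "('g set \<Rightarrow> 'm set \<Rightarrow> real) set \<Rightarrow> ('g set \<Rightarrow> 'm set \<Rightarrow> real) set \<Rightarrow>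
   ('a set \<Rightarrow> real) set \<Rightarrow> ('a set \<Rightarrow> real) set \<Rightarrow> bool" where
  "subquot_iso Z B Z' B' \<longleftrightarrow>
     (\<exists>f. (\<forall>x y. f (\<lambda>\<sigma> \<rho>. x \<sigma> \<rho> + y \<sigma> \<rho>) = (\<lambda>\<tau>. f x \<tau> + f y \<tau>))
        \<and> (\<forall>c x. f (\<lambda>\<sigma> \<rho>. c * x \<sigma> \<rho>) = (\<lambda>\<tau>. c * f x \<tau>))
        \<and> f ` Z \<subseteq> Z'
        \<and> (\<forall>z\<in>Z. f z \<in> B' \<longleftrightarrow> z \<in> B)
        \<and> (\<forall>z'\<in>Z'. \<exists>z\<in>Z. (\<lambda>\<tau>. f z \<tau> - z' \<tau>) \<in> B'))"

end

theory Submission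
  imports Defs
begin

definition fsum :: "'g set \<Rightarrow> ('g set \<Rightarrow> 'm set \<Rightarrow> real) \<Rightarrow> 'm set \<Rightarrow> real" where
  "fsum G x = (\<lambda>\<tau>. \<Sum>g\<in>G. x {g} \<tau>)"

lemma antisym_sum_zero:
  fixes F :: "'a \<Rightarrow> 'a \<Rightarrow> real"
  assumes "finite G" and anti: "\<And>g h. g \<noteq> h \<Longrightarrow> F g h = - F h g"
  shows "(\<Sum>g\<in>G. \<Sum>h\<in>G-{g}. F g h) = 0"
proof -
  define F' where "F' g h = (if g = h then 0 else F g h)" for g h
  have a': "F' g h = - F' h g" for g h
    by (cases "g = h") (simp_all add: F'_def anti[of g h])
  have e: "(\<Sum>h\<in>G-{g}. F g h) = (\<Sum>h\<in>G. F' g h)" for g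
  proof -
    have "(\<Sum>h\<in>G. F' g h) = (\<Sum>h\<in>G-{g}. F' g h)"
      by (rule sum.mono_neutral_right) (auto simp: assms(1) F'_def)
    also have "\<dots> = (\<Sum>h\<in>G-{g}. F g h)" by (rule sum.cong) (auto simp: F'_def)
    finally show ?thesis by simp
  qed
  have "(\<Sum>g\<in>G. \<Sum>h\<in>G. F' g h) = (\<Sum>h\<in>G. \<Sum>g\<in>G. F' g h)" by (rule sum.swap)
  also have "\<dots> = (\<Sum>h\<in>G. \<Sum>g\<in>G. - F' h g)" by (intro sum.cong refl a')
  also have "\<dots> = - (\<Sum>h\<in>G. \<Sum>g\<in>G. F' h g)" by (simp add: sum_negf)
  finally have "(\<Sum>g\<in>G. \<Sum>h\<in>G. F' g h) = 0" by simp
  then show ?thesis by (simp add: e)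
qed

lemma fsum_bd:
  fixes G :: "'g::linorder set"
  assumes "finite G"
  shows "fsum G (cosheaf_bd G a) = (\<lambda>_. 0)"
proof
  fix \<tau>
  have c: "card {w\<in>{g}. w < h} = (if g < h then 1 else 0)" for g h :: 'g
  proof -
    have "{w\<in>{g}. w < h} = (if g < h then {g} else {})" by auto
    then show ?thesis by simp
  qed
  show "fsum G (cosheaf_bd G a) \<tau> = 0"
    unfolding fsum_def cosheaf_bd_def
  proof (rule antisym_sum_zero[OF assms])
    fix g h :: 'g assume ne: "g \<noteq> h"
    have ins: "insert h {g} = insert g {h}" by auto
    show "(- 1) ^ card {w \<in> {g}. w < h} * a (insert h {g}) \<tau> =
          - ((- 1) ^ card {w \<in> {h}. w < g} * a (insert g {h}) \<tau>)"
    proof (cases "g < h")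
      case True
      then have e: "card {w \<in> {g}. w < h} = 1" "card {w \<in> {h}. w < g} = 0" using c[of g h] c[of h g] by auto
      show ?thesis unfolding ins e by simp
    next
      case False
      then have "h < g" using ne by auto
      then have e: "card {w \<in> {g}. w < h} = 0" "card {w \<in> {h}. w < g} = 1" using c[of g h] c[of h g] by auto
      show ?thesis unfolding ins e by simp
    qed
  qed
qed

lemma fsum_d:
  assumes "finite G" "finite M"
  shows "fsum G (cosheaf_d M x) = bd M (fsum G x)"
proof
  fix \<tau>
  show "fsum G (cosheaf_d M x) \<tau> = bd M (fsum G x) \<tau>"
    unfolding fsum_def cosheaf_d_def bd_def sum_distrib_left by (rule sum.swap)
qed

lemma fsum_chains:
  assumes "x \<in> cosheaf_chains G M I k 0"
  shows "fsum G x \<in> chains (dowker M G (converse I)) k"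
  unfolding chains_def
proof (intro CollectI allI impI)
  fix \<rho> assume "fsum G x \<rho> \<noteq> 0"
  then obtain g where g: "g \<in> G" "x {g} \<rho> \<noteq> 0" unfolding fsum_def
    by (meson sum.neutral)
  then have "x {g} \<noteq> (\<lambda>_. 0)" by auto
  with assms have d: "{g} \<in> dowker G M I" and ch: "x {g} \<in> chains (full_simplex (deriv G M I {g})) k"
    unfolding cosheaf_chains_def by auto
  from ch g have "\<rho> \<in> full_simplex (deriv G M I {g})" "card \<rho> = k + 1"
    unfolding chains_def by auto
  then show "\<rho> \<in> dowker M G (converse I) \<and> card \<rho> = k + 1"
    using g unfolding full_simplex_def dowker_def deriv_def by auto
qed

definition g0 :: "'g set \<Rightarrow> ('g \<times> 'm) set \<Rightarrow> 'm set \<Rightarrow> 'g" where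
  "g0 G I \<rho> = (SOME g. g \<in> G \<and> (\<forall>m\<in>\<rho>. (g, m) \<in> I))"

definition lift :: "'g set \<Rightarrow> ('g \<times> 'm) set \<Rightarrow> ('m set \<Rightarrow> real) \<Rightarrow> 'g set \<Rightarrow> 'm set \<Rightarrow> real" where
  "lift G I c = (\<lambda>\<sigma> \<rho>. if \<sigma> = {g0 G I \<rho>} then c \<rho> else 0)"

lemma g0:
  assumes "\<rho> \<in> dowker M G (converse I)"
  shows "g0 G I \<rho> \<in> G \<and> (\<forall>m\<in>\<rho>. (g0 G I \<rho>, m) \<in> I)"
proof -
  from assms have "\<exists>g. g \<in> G \<and> (\<forall>m\<in>\<rho>. (g, m) \<in> I)"
    unfolding dowker_def deriv_def by auto
  then show ?thesis unfolding g0_def by (rule someI_ex)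
qed

lemma lift_chains:
  assumes "c \<in> chains (dowker M G (converse I)) j"
  shows "lift G I c \<in> cosheaf_chains G M I j 0"
  unfolding cosheaf_chains_def
proof (intro CollectI allI, rule conjI, rule impI)
  fix \<sigma>
  assume "lift G I c \<sigma> \<noteq> (\<lambda>_. 0)"
  then obtain \<rho> where "lift G I c \<sigma> \<rho> \<noteq> 0" by auto
  then have r: "\<sigma> = {g0 G I \<rho>}" "c \<rho> \<noteq> 0" unfolding lift_def by (auto split: if_splits)
  with assms have "\<rho> \<in> dowker M G (converse I)" unfolding chains_def by auto
  with g0[OF this] r show "\<sigma> \<in> dowker G M I \<and> card \<sigma> = 0 + 1"
    unfolding dowker_def deriv_def by auto
next
  fix \<sigma>
  show "lift G I c \<sigma> \<in> chains (full_simplex (deriv G M I \<sigma>)) j"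
    unfolding chains_def
  proof (intro CollectI allI impI)
    fix \<rho> assume "lift G I c \<sigma> \<rho> \<noteq> 0"
    then have r: "\<sigma> = {g0 G I \<rho>}" "c \<rho> \<noteq> 0" unfolding lift_def by (auto split: if_splits)
    with assms have rd: "\<rho> \<in> dowker M G (converse I)" "card \<rho> = j + 1" unfolding chains_def by auto
    with g0[OF rd(1)] r show "\<rho> \<in> full_simplex (deriv G M I \<sigma>) \<and> card \<rho> = j + 1"
      unfolding dowker_def deriv_def full_simplex_def by auto
  qed
qed

lemma fsum_lift:
  assumes "finite G" "c \<in> chains (dowker M G (converse I)) j"
  shows "fsum G (lift G I c) = c"
proof
  fix \<rho>
  show "fsum G (lift G I c) \<rho> = c \<rho>"
  proof (cases "c \<rho> = 0")
    case True then show ?thesis unfolding fsum_def lift_def by (auto intro!: sum.neutral)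
  next
    case False
    with assms have "\<rho> \<in> dowker M G (converse I)" unfolding chains_def by auto
    from g0[OF this] have "g0 G I \<rho> \<in> G" by simp
    then show ?thesis unfolding fsum_def lift_def using assms(1) by simp
  qed
qed

lemma d_chains:
  assumes "x \<in> cosheaf_chains G M I (j + 1) i"
  shows "cosheaf_d M x \<in> cosheaf_chains G M I j i"
  unfolding cosheaf_chains_def
proof (intro CollectI allI, rule conjI, rule impI)
  fix \<sigma>
  assume "cosheaf_d M x \<sigma> \<noteq> (\<lambda>_. 0)"
  then have "x \<sigma> \<noteq> (\<lambda>_. 0)" unfolding cosheaf_d_def bd_def by auto
  with assms show "\<sigma> \<in> dowker G M I \<and> card \<sigma> = i + 1" unfolding cosheaf_chains_def by auto
next
  fix \<sigma>
  from assms have ch: "x \<sigma> \<in> chains (full_simplex (deriv G M I \<sigma>)) (j + 1)"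
    unfolding cosheaf_chains_def by auto
  show "cosheaf_d M x \<sigma> \<in> chains (full_simplex (deriv G M I \<sigma>)) j"
    unfolding chains_def
  proof (intro CollectI allI impI)
    fix \<tau> assume "cosheaf_d M x \<sigma> \<tau> \<noteq> 0"
    have "\<exists>v\<in>M - \<tau>. x \<sigma> (insert v \<tau>) \<noteq> 0"
    proof (rule ccontr)
      assume "\<not> ?thesis"
      then have "\<forall>v\<in>M - \<tau>. (-1) ^ card {w\<in>\<tau>. w < v} * x \<sigma> (insert v \<tau>) = 0" by auto
      then have "cosheaf_d M x \<sigma> \<tau> = 0" unfolding cosheaf_d_def bd_def by (rule sum.neutral)
      with \<open>cosheaf_d M x \<sigma> \<tau> \<noteq> 0\<close> show False by contradiction
    qed
    then obtain v where v: "v \<in> M - \<tau>" "x \<sigma> (insert v \<tau>) \<noteq> 0" by blast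
    with ch have i: "insert v \<tau> \<in> full_simplex (deriv G M I \<sigma>)" "card (insert v \<tau>) = j + 2"
      unfolding chains_def by auto
    have "finite (insert v \<tau>)"
    proof (rule ccontr)
      assume "infinite (insert v \<tau>)"
      then have "card (insert v \<tau>) = 0" by (rule card.infinite)
      with i(2) show False by simp
    qed
    then have f: "finite \<tau>" by simp
    with i v have c: "card \<tau> = j + 1" by simp
    then have "\<tau> \<noteq> {}" by auto
    with i c show "\<tau> \<in> full_simplex (deriv G M I \<sigma>) \<and> card \<tau> = j + 1"
      unfolding full_simplex_def by auto
  qed
qed

lemma cc_iff: "x \<in> cosheaf_chains G M I j i \<longleftrightarrow>
   (\<forall>\<sigma>. x \<sigma> \<noteq> (\<lambda>_. 0) \<longrightarrow> \<sigma> \<in> dowker G M I \<and> card \<sigma> = i + 1) \<and>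
   (\<forall>\<sigma> \<rho>. x \<sigma> \<rho> \<noteq> 0 \<longrightarrow> \<rho> \<in> full_simplex (deriv G M I \<sigma>) \<and> card \<rho> = j + 1)"
  unfolding cosheaf_chains_def chains_def mem_Collect_eq all_conj_distrib by (rule refl)

lemma diff_chains:
  assumes "x \<in> cosheaf_chains G M I j i" "y \<in> cosheaf_chains G M I j i"
  shows "(\<lambda>\<sigma> \<rho>. x \<sigma> \<rho> - y \<sigma> \<rho>) \<in> cosheaf_chains G M I j i"
proof -
  have X1: "\<And>\<sigma>. x \<sigma> \<noteq> (\<lambda>_. 0) \<Longrightarrow> \<sigma> \<in> dowker G M I \<and> card \<sigma> = i + 1"
   and X2: "\<And>\<sigma> \<rho>. x \<sigma> \<rho> \<noteq> 0 \<Longrightarrow> \<rho> \<in> full_simplex (deriv G M I \<sigma>) \<and> card \<rho> = j + 1"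
    using assms(1) unfolding cc_iff by simp_all
  have Y1: "\<And>\<sigma>. y \<sigma> \<noteq> (\<lambda>_. 0) \<Longrightarrow> \<sigma> \<in> dowker G M I \<and> card \<sigma> = i + 1"
   and Y2: "\<And>\<sigma> \<rho>. y \<sigma> \<rho> \<noteq> 0 \<Longrightarrow> \<rho> \<in> full_simplex (deriv G M I \<sigma>) \<and> card \<rho> = j + 1"
    using assms(2) unfolding cc_iff by simp_all
  show ?thesis unfolding cc_iff
  proof (intro conjI allI impI)
    fix \<sigma> assume "(\<lambda>\<rho>. x \<sigma> \<rho> - y \<sigma> \<rho>) \<noteq> (\<lambda>_. 0)"
    then obtain \<rho> where "x \<sigma> \<rho> \<noteq> y \<sigma> \<rho>" by (auto simp: fun_eq_iff)
    then have "x \<sigma> \<rho> \<noteq> 0 \<or> y \<sigma> \<rho> \<noteq> 0" by auto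
    then have "x \<sigma> \<noteq> (\<lambda>_. 0) \<or> y \<sigma> \<noteq> (\<lambda>_. 0)" by auto
    then show "\<sigma> \<in> dowker G M I" "card \<sigma> = i + 1" using X1 Y1 by blast+
  next
    fix \<sigma> \<rho> assume "x \<sigma> \<rho> - y \<sigma> \<rho> \<noteq> 0"
    then have "x \<sigma> \<rho> \<noteq> 0 \<or> y \<sigma> \<rho> \<noteq> 0" by auto
    then show "\<rho> \<in> full_simplex (deriv G M I \<sigma>)" "card \<rho> = j + 1" using X2 Y2 by blast+
  qed
qed


definition Sset :: "'g set \<Rightarrow> ('g \<times> 'm) set \<Rightarrow> 'm set \<Rightarrow> 'g set" where
  "Sset G I \<tau> = {g \<in> G. \<forall>m\<in>\<tau>. (g, m) \<in> I}"

definition hom :: "'g::linorder set \<Rightarrow> ('g \<times> 'm) set \<Rightarrow> ('g set \<Rightarrow> 'm set \<Rightarrow> real) \<Rightarrow> 'g set \<Rightarrow> 'm set \<Rightarrow> real" where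
  "hom G I w = (\<lambda>\<sigma> \<tau>. if card \<sigma> = 2 \<and> \<sigma> \<subseteq> Sset G I \<tau>
       then (w {Max \<sigma>} \<tau> - w {Min \<sigma>} \<tau>) / real (card (Sset G I \<tau>)) else 0)"

lemma w_support:
  assumes "w \<in> cosheaf_chains G M I j 0" "w \<sigma> \<tau> \<noteq> 0"
  shows "\<exists>g. \<sigma> = {g} \<and> g \<in> Sset G I \<tau> \<and> \<tau> \<noteq> {} \<and> \<tau> \<subseteq> M \<and> card \<tau> = j + 1"
proof -
  from assms(2) have "w \<sigma> \<noteq> (\<lambda>_. 0)" by auto
  with assms(1) have d: "\<sigma> \<in> dowker G M I" "card \<sigma> = 1" unfolding cc_iff by auto
  then obtain g where g: "\<sigma> = {g}" by (auto simp: card_1_singleton_iff)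
  from assms have "\<tau> \<in> full_simplex (deriv G M I \<sigma>)" "card \<tau> = j + 1" unfolding cc_iff by auto
  with d g show ?thesis unfolding full_simplex_def deriv_def dowker_def Sset_def by auto
qed

lemma hom_support:
  assumes "w \<in> cosheaf_chains G M I j 0" "hom G I w \<sigma> \<tau> \<noteq> 0"
  shows "card \<sigma> = 2 \<and> \<sigma> \<subseteq> Sset G I \<tau> \<and> \<tau> \<noteq> {} \<and> \<tau> \<subseteq> M \<and> card \<tau> = j + 1"
proof -
  from assms(2) have c: "card \<sigma> = 2" "\<sigma> \<subseteq> Sset G I \<tau>"
    and n: "w {Max \<sigma>} \<tau> \<noteq> 0 \<or> w {Min \<sigma>} \<tau> \<noteq> 0"
    unfolding hom_def by (auto split: if_splits)
  from n obtain g where "w {g} \<tau> \<noteq> 0" by blast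
  from w_support[OF assms(1) this] c show ?thesis by auto
qed

lemma hom_chains:
  assumes "w \<in> cosheaf_chains G M I j 0"
  shows "hom G I w \<in> cosheaf_chains G M I j 1"
  unfolding cc_iff
proof (intro conjI allI impI)
  fix \<sigma> assume "hom G I w \<sigma> \<noteq> (\<lambda>_. 0)"
  then obtain \<tau> where "hom G I w \<sigma> \<tau> \<noteq> 0" by auto
  from hom_support[OF assms this] show "\<sigma> \<in> dowker G M I" "card \<sigma> = 1 + 1"
    unfolding dowker_def Sset_def deriv_def by auto
next
  fix \<sigma> \<tau> assume "hom G I w \<sigma> \<tau> \<noteq> 0"
  from hom_support[OF assms this] show "\<tau> \<in> full_simplex (deriv G M I \<sigma>)" "card \<tau> = j + 1"
    unfolding full_simplex_def Sset_def deriv_def by auto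
qed

lemma bd_hom:
  fixes G :: "'g::linorder set"
  assumes fin: "finite G" and w: "w \<in> cosheaf_chains G M I j 0" and z: "fsum G w = (\<lambda>_. 0)"
  shows "cosheaf_bd G (hom G I w) = w"
proof (intro ext)
  fix \<sigma> \<tau>
  show "cosheaf_bd G (hom G I w) \<sigma> \<tau> = w \<sigma> \<tau>"
  proof (cases "card \<sigma> = 1")
    case False
    have w0: "w \<sigma> \<tau> = 0"
    proof (rule ccontr)
      assume "w \<sigma> \<tau> \<noteq> 0"
      from w_support[OF w this] obtain g' where "\<sigma> = {g'}" by (elim exE conjE)
      with False show False by simp
    qed
    have hz: "hom G I w (insert h \<sigma>) \<tau> = 0" if "h \<in> G - \<sigma>" for h
    proof -
      have "card (insert h \<sigma>) \<noteq> 2"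
      proof (cases "finite \<sigma>")
        case True
        have hn: "h \<notin> \<sigma>" using that by blast
        have "card (insert h \<sigma>) = Suc (card \<sigma>)" by (rule card_insert_disjoint[OF True hn])
        then show ?thesis using False by linarith
      next
        case False
        then have "infinite (insert h \<sigma>)" by simp
        then have "card (insert h \<sigma>) = 0" by (rule card.infinite)
        then show ?thesis by simp
      qed
      then show ?thesis unfolding hom_def by simp
    qed
    have "cosheaf_bd G (hom G I w) \<sigma> \<tau> = 0"
      unfolding cosheaf_bd_def
    proof (rule sum.neutral, rule ballI)
      fix x assume "x \<in> G - \<sigma>"
      show "(- 1) ^ card {w \<in> \<sigma>. w < x} * hom G I w (insert x \<sigma>) \<tau> = 0"
        unfolding hz[OF \<open>x \<in> G - \<sigma>\<close>] by (rule mult_zero_right)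
    qed
    then show ?thesis using w0 by simp
  next
    case True
    then obtain g where g: "\<sigma> = {g}" by (auto simp: card_1_singleton_iff)
    define S where "S = Sset G I \<tau>"
    define n where "n = card S"
    have SG: "S \<subseteq> G" unfolding S_def Sset_def by auto
    have finS: "finite S" by (rule finite_subset[OF SG fin])
    have c: "card {w\<in>{g}. w < h} = (if g < h then 1 else 0)" for h :: 'g
    proof -
      have "{w\<in>{g}. w < h} = (if g < h then {g} else {})" by auto
      then show ?thesis by simp
    qed
    have trm: "(-1) ^ card {w\<in>{g}. w < h} * hom G I w (insert h {g}) \<tau> =
        (if h \<in> S \<and> g \<in> S then (w {g} \<tau> - w {h} \<tau>) / real n else 0)" if "h \<noteq> g" for h
    proof -
      have cd: "card {h, g} = 2" using that by simp
      have mm: "Max {h, g} = max h g" "Min {h, g} = min h g" by simp_all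
      have sub: "({h, g} \<subseteq> S) = (h \<in> S \<and> g \<in> S)" by simp
      have hv: "hom G I w (insert h {g}) \<tau> =
          (if h \<in> S \<and> g \<in> S then (w {max h g} \<tau> - w {min h g} \<tau>) / real n else 0)"
        unfolding hom_def S_def[symmetric] n_def[symmetric] using cd mm sub by simp
      show ?thesis
      proof (cases "g < h")
        case True
        then have e: "max h g = h" "min h g = g" "card {w\<in>{g}. w < h} = 1" using c[of h] by auto
        show ?thesis unfolding hv e by (simp add: diff_divide_distrib)
      next
        case False
        then have "h < g" using that by auto
        then have e: "max h g = g" "min h g = h" "card {w\<in>{g}. w < h} = 0" using c[of h] False by auto
        show ?thesis unfolding hv e by simp
      qed
    qed
    have "cosheaf_bd G (hom G I w) \<sigma> \<tau> =
        (\<Sum>h\<in>G - {g}. if h \<in> S \<and> g \<in> S then (w {g} \<tau> - w {h} \<tau>) / real n else 0)"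
      unfolding cosheaf_bd_def g by (rule sum.cong[OF refl], rule trm) auto
    also have "\<dots> = w {g} \<tau>"
    proof (cases "g \<in> S")
      case False
      have "w {g} \<tau> = 0"
      proof (rule ccontr)
        assume "w {g} \<tau> \<noteq> 0"
        from w_support[OF w this] False show False unfolding S_def by auto
      qed
      then show ?thesis using False by simp
    next
      case True
      have wout: "w {h} \<tau> = 0" if "h \<notin> S" for h
      proof (rule ccontr)
        assume "w {h} \<tau> \<noteq> 0"
        from w_support[OF w this] that show False unfolding S_def by auto
      qed
      have sumS: "(\<Sum>h\<in>S. w {h} \<tau>) = 0"
      proof -
        have "(\<Sum>h\<in>S. w {h} \<tau>) = (\<Sum>h\<in>G. w {h} \<tau>)"
          by (rule sum.mono_neutral_left) (use fin SG wout in auto)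
        also have "\<dots> = 0" using fun_cong[OF z, of \<tau>] unfolding fsum_def by simp
        finally show ?thesis .
      qed
      have "card S > 0" using True finS card_gt_0_iff by blast
      then have npos: "n \<ge> 1" unfolding n_def by simp
      have "(\<Sum>h\<in>G - {g}. if h \<in> S \<and> g \<in> S then (w {g} \<tau> - w {h} \<tau>) / real n else 0)
          = (\<Sum>h\<in>S - {g}. (w {g} \<tau> - w {h} \<tau>) / real n)"
        apply (rule sum.mono_neutral_cong_right)
        using True SG fin by auto
      also have "\<dots> = ((real n - 1) * w {g} \<tau> - (\<Sum>h\<in>S - {g}. w {h} \<tau>)) / real n"
      proof -
        have "(\<Sum>h\<in>S - {g}. (w {g} \<tau> - w {h} \<tau>) / real n)
            = (\<Sum>h\<in>S - {g}. w {g} \<tau> - w {h} \<tau>) / real n"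
          by (simp add: sum_divide_distrib)
        also have "(\<Sum>h\<in>S - {g}. w {g} \<tau> - w {h} \<tau>) = real (card (S - {g})) * w {g} \<tau> - (\<Sum>h\<in>S - {g}. w {h} \<tau>)"
          by (simp add: sum_subtractf)
        also have "real (card (S - {g})) = real n - 1"
          using True finS npos unfolding n_def by (simp add: card_Diff_singleton of_nat_diff)
        finally show ?thesis .
      qed
      also have "(\<Sum>h\<in>S - {g}. w {h} \<tau>) = - w {g} \<tau>"
        using sumS True finS by (simp add: sum_diff1)
      finally have e: "(\<Sum>h\<in>G - {g}. if h \<in> S \<and> g \<in> S then (w {g} \<tau> - w {h} \<tau>) / real n else 0)
          = ((real n - 1) * w {g} \<tau> - - w {g} \<tau>) / real n" .
      have "real n \<noteq> 0" using npos by simp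
      then show ?thesis unfolding e by (simp add: field_simps)
    qed
    finally show ?thesis by (simp add: g)
  qed
qed


theorem mainTheorem7:
  fixes G :: "'g::linorder set" and M :: "'m::linorder set" and I :: "('g \<times> 'm) set"
  assumes "finite G" and "finite M" and "I \<subseteq> G \<times> M"
  shows "subquot_iso (H0_cycles G M I k) (H0_boundaries G M I k)
           (cycles M (dowker M G (converse I)) k) (boundaries M (dowker M G (converse I)) k)"
proof -
  note fin = assms(1) and finM = assms(2)
  define K where "K = dowker M G (converse I)"
  have add: "fsum G (\<lambda>\<sigma> \<rho>. x \<sigma> \<rho> + y \<sigma> \<rho>) = (\<lambda>\<tau>. fsum G x \<tau> + fsum G y \<tau>)" for x y
    unfolding fsum_def by (simp add: sum.distrib)
  have scl: "fsum G (\<lambda>\<sigma> \<rho>. c * x \<sigma> \<rho>) = (\<lambda>\<tau>. c * fsum G x \<tau>)" for c x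
    unfolding fsum_def by (simp add: sum_distrib_left)
  have bd0: "bd M (\<lambda>_. 0) = (\<lambda>_. 0)" unfolding bd_def by simp
  have ch0: "(\<lambda>_. 0) \<in> chains K (k + 1)" unfolding chains_def by simp
  have ker: "\<exists>a\<in>cosheaf_chains G M I j 1. cosheaf_bd G a = w"
    if "w \<in> cosheaf_chains G M I j 0" "fsum G w = (\<lambda>_. 0)" for w j
    using hom_chains[OF that(1)] bd_hom[OF fin that] by blast
  have img: "fsum G z \<in> cycles M K k" if "z \<in> H0_cycles G M I k" for z
  proof -
    from that have z0: "z \<in> cosheaf_chains G M I k 0"
      and zc: "k = 0 \<or> cosheaf_d M z \<in> cosheaf_bd G ` cosheaf_chains G M I (k - 1) 1"
      unfolding H0_cycles_def by auto
    have "fsum G z \<in> chains K k" unfolding K_def by (rule fsum_chains[OF z0])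
    moreover have "k = 0 \<or> bd M (fsum G z) = (\<lambda>_. 0)"
    proof (cases "k = 0")
      case False
      with zc obtain y where "cosheaf_d M z = cosheaf_bd G y" by blast
      then have "bd M (fsum G z) = fsum G (cosheaf_bd G y)" using fsum_d[OF fin finM, of z] by simp
      then show ?thesis using fsum_bd[OF fin, of y] by simp
    qed simp
    ultimately show ?thesis unfolding cycles_def by simp
  qed
  have bnd: "fsum G z \<in> boundaries M K k \<longleftrightarrow> z \<in> H0_boundaries G M I k"
    if zZ: "z \<in> H0_cycles G M I k" for z
  proof
    from zZ have z0: "z \<in> cosheaf_chains G M I k 0" unfolding H0_cycles_def by auto
    assume "fsum G z \<in> boundaries M K k"
    then obtain c where c: "c \<in> chains K (k + 1)" and fz: "fsum G z = bd M c"
      unfolding boundaries_def by auto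
    define b0 where "b0 = lift G I c"
    have b0: "b0 \<in> cosheaf_chains G M I (k + 1) 0" unfolding b0_def
      by (rule lift_chains) (use c K_def in simp)
    have fb0: "fsum G b0 = c" unfolding b0_def
      by (rule fsum_lift[OF fin]) (use c K_def in simp)
    have db0: "cosheaf_d M b0 \<in> cosheaf_chains G M I k 0" by (rule d_chains[OF b0])
    define w where "w = (\<lambda>\<sigma> \<rho>. z \<sigma> \<rho> - cosheaf_d M b0 \<sigma> \<rho>)"
    have w: "w \<in> cosheaf_chains G M I k 0" unfolding w_def by (rule diff_chains[OF z0 db0])
    have "fsum G w = (\<lambda>\<tau>. fsum G z \<tau> - fsum G (cosheaf_d M b0) \<tau>)"
      unfolding w_def fsum_def by (simp add: sum_subtractf)
    also have "\<dots> = (\<lambda>_. 0)" using fz fsum_d[OF fin finM, of b0] fb0 by simp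
    finally obtain a where a: "a \<in> cosheaf_chains G M I k 1" "cosheaf_bd G a = w"
      using ker[OF w] by blast
    have "z = (\<lambda>\<sigma> \<rho>. cosheaf_bd G a \<sigma> \<rho> + cosheaf_d M b0 \<sigma> \<rho>)"
      unfolding a(2) w_def by simp
    then show "z \<in> H0_boundaries G M I k" unfolding H0_boundaries_def
      using a(1) b0 by blast
  next
    assume "z \<in> H0_boundaries G M I k"
    then obtain a b where zab: "z = (\<lambda>\<sigma> \<rho>. a \<sigma> \<rho> + b \<sigma> \<rho>)"
      and a: "a \<in> cosheaf_bd G ` cosheaf_chains G M I k 1"
      and b: "b \<in> cosheaf_d M ` cosheaf_chains G M I (k + 1) 0"
      unfolding H0_boundaries_def by blast
    from a obtain a0 where a0: "a = cosheaf_bd G a0" by blast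
    from b obtain b0 where b0: "b0 \<in> cosheaf_chains G M I (k + 1) 0" "b = cosheaf_d M b0" by blast
    have "fsum G z = (\<lambda>\<tau>. fsum G a \<tau> + fsum G b \<tau>)" unfolding zab by (rule add)
    also have "\<dots> = bd M (fsum G b0)"
      using fsum_bd[OF fin, of a0] fsum_d[OF fin finM, of b0] a0 b0(2) by simp
    finally have "fsum G z = bd M (fsum G b0)" .
    moreover have "fsum G b0 \<in> chains K (k + 1)" unfolding K_def by (rule fsum_chains[OF b0(1)])
    ultimately show "fsum G z \<in> boundaries M K k" unfolding boundaries_def by blast
  qed
  have surj: "\<exists>z\<in>H0_cycles G M I k. (\<lambda>\<tau>. fsum G z \<tau> - z' \<tau>) \<in> boundaries M K k"
    if z': "z' \<in> cycles M K k" for z'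
  proof -
    from z' have c: "z' \<in> chains K k" and cyc: "k = 0 \<or> bd M z' = (\<lambda>_. 0)"
      unfolding cycles_def by auto
    define z where "z = lift G I z'"
    have z0: "z \<in> cosheaf_chains G M I k 0" unfolding z_def
      by (rule lift_chains) (use c K_def in simp)
    have fz: "fsum G z = z'" unfolding z_def
      by (rule fsum_lift[OF fin]) (use c K_def in simp)
    have "z \<in> H0_cycles G M I k"
    proof (cases "k = 0")
      case True then show ?thesis using z0 unfolding H0_cycles_def by simp
    next
      case False
      then have kk: "k = (k - 1) + 1" by simp
      have dz: "cosheaf_d M z \<in> cosheaf_chains G M I (k - 1) 0"
        by (rule d_chains) (use z0 kk in simp)
      have "fsum G (cosheaf_d M z) = (\<lambda>_. 0)"
        using fsum_d[OF fin finM, of z] fz cyc False by simp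
      from ker[OF dz this] obtain a where "a \<in> cosheaf_chains G M I (k - 1) 1" "cosheaf_bd G a = cosheaf_d M z"
        by blast
      then have "cosheaf_d M z \<in> cosheaf_bd G ` cosheaf_chains G M I (k - 1) 1"
        by (metis image_eqI)
      then show ?thesis using z0 unfolding H0_cycles_def by simp
    qed
    moreover have "(\<lambda>\<tau>. fsum G z \<tau> - z' \<tau>) \<in> boundaries M K k"
    proof -
      have "(\<lambda>\<tau>. fsum G z \<tau> - z' \<tau>) = bd M (\<lambda>_. 0)" using fz bd0 by simp
      then show ?thesis unfolding boundaries_def using ch0 by blast
    qed
    ultimately show ?thesis by blast
  qed
  show ?thesis
    unfolding subquot_iso_def K_def[symmetric]
    apply (rule exI[of _ "fsum G"])
    using add scl img bnd surj by blast
qed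

end
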